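(* Let $\mathcal{V}\subset\mathbb{R}$ be finite and $\mathcal{W}\subset\mathcal{V}$ with $p:=|\mathcal{W}|$, and suppose the average of the elements of $\mathcal{V}$ and the average of the elements of $\mathcal{W}$ are both zero. Consider inputs with two components $z_1,z_2\in\{[v]:v\in\mathcal{V}\}$, where component $[v]$ has associated value $v$, and target $y([v_1],[v_2])=v_1+v_2$. The training set consists of all pairs $([v_1],[v_2])$ with at least one of $v_1,v_2$ in $\mathcal{W}$. Let the inputs be represented with a compositionally structured kernel $K$ with $K=\kappa_k$ for pairs of inputs sharing exactly $k\in\{0,1,2\}$ components, with $\kappa_2>\kappa_0$, and let $f$ be the kernel model (minimum $\ell_2$-norm linear readout) that fits the training data exactly. Then for every test pair $([v_1],[v_2])$ with $v_1,v_2\in\mathcal{V}\setminus\mathcal{W}$, $$f([v_1],[v_2])=m(v_1+v_2),\qquad m:=\frac{p\,S(1;2)}{1+(p-2)S(1;2)},$$ where $S(1;2)=\frac{\kappa_1-\kappa_0}{\kappa_2-\kappa_0}$.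
   Context: A kernel is compositionally structured iff the similarity of two inputs depends only on the number of components they share. The model is $f(x)=w^T\phi(x)$ with $w$ the minimum $\ell_2$-norm readout that exactly interpolates the training targets (the limit of gradient descent from $w_0=0$); in dual form $f(x)=\sum_i a_iK(x,x_i)$ with $\sum_j a_jK(x_i,x_j)=y_i$ on the training set, where the training kernel matrix is assumed invertible. The quantity $S(1;2)$ is the representational salience of single components for two-component inputs, which for this kernel equals $(\kappa_1-\kappa_0)/(\kappa_2-\kappa_0)$. *)

theory Defs
  imports "HOL-Analysis.Analysis"
begin

text \<open>Two-component inputs: a component [v] is identified with its value v,
  an input is a pair (z1, z2) of components in slots 1 and 2.\<close>

definition shared :: "real \<times> real \<Rightarrow> real \<times> real \<Rightarrow> nat" where
  "shared x x' = (if fst x = fst x' then 1 else 0) + (if snd x = snd x' then 1 else 0)"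

definition comp_kernel :: "(nat \<Rightarrow> real) \<Rightarrow> real \<times> real \<Rightarrow> real \<times> real \<Rightarrow> real" where
  "comp_kernel \<kappa> x x' = \<kappa> (shared x x')"

definition train_set :: "real set \<Rightarrow> real set \<Rightarrow> (real \<times> real) set" where
  "train_set V W = {(v1, v2). v1 \<in> V \<and> v2 \<in> V \<and> (v1 \<in> W \<or> v2 \<in> W)}"

text \<open>The kernel matrix (K(x_i,x_j))_{i,j in T} is invertible, i.e. (being square)
  the associated linear map on coefficient vectors indexed by T is injective.\<close>
definition kernel_matrix_invertible ::
  "('x \<Rightarrow> 'x \<Rightarrow> real) \<Rightarrow> 'x set \<Rightarrow> bool" where
  "kernel_matrix_invertible K T \<longleftrightarrow>
     (\<forall>c. (\<forall>i\<in>T. (\<Sum>j\<in>T. c j * K i j) = 0) \<longrightarrow> (\<forall>j\<in>T. c j = 0))"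

text \<open>Dual form of the min-norm interpolating kernel model:
  f(x) = sum_i a_i K(x, x_i), with a solving the interpolation system on T.\<close>
definition kernel_model ::
  "('x \<Rightarrow> 'x \<Rightarrow> real) \<Rightarrow> 'x set \<Rightarrow> ('x \<Rightarrow> real) \<Rightarrow> 'x \<Rightarrow> real" where
  "kernel_model K T a x = (\<Sum>i\<in>T. a i * K x i)"

definition salience_1_2 :: "(nat \<Rightarrow> real) \<Rightarrow> real" where
  "salience_1_2 \<kappa> = (\<kappa> 1 - \<kappa> 0) / (\<kappa> 2 - \<kappa> 0)"

end

theory Submission imports Defs begin

lemma sumT:
  fixes F :: "real \<times> real \<Rightarrow> real"
  assumes "finite V" "W \<subseteq> V"
  shows "sum F (train_set V W) = sum F (V \<times> V) - sum F ((V - W) \<times> (V - W))"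
proof -
  have e: "train_set V W = V \<times> V - (V - W) \<times> (V - W)"
    unfolding train_set_def by auto
  show ?thesis unfolding e
    by (rule sum_diff) (use assms in auto)
qed

lemma cp: "sum G (P \<times> Q) = (\<Sum>a\<in>P. \<Sum>b\<in>Q. G (a, b))"
  by (simp add: sum.cartesian_product)

lemma ifm: "(if c then 1 else 0) * (x::real) = (if c then x else 0)" by simp
lemma ifm2: "(if c then if d then 1 else 0 else 0) * (x::real) = (if c then (if d then x else 0) else 0)" by simp
lemma sif: "(\<Sum>b\<in>Q. if c then f b else (0::real)) = (if c then sum f Q else 0)" by simp

lemma ps1:
  fixes h :: "real \<Rightarrow> real"
  assumes "finite P" "finite Q"
  shows "(\<Sum>y\<in>P \<times> Q. h (fst y) + h (snd y)) = real (card Q) * sum h P + real (card P) * sum h Q"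
  unfolding cp by (simp add: sum.distrib sum_distrib_left)

lemma ps2:
  fixes h :: "real \<Rightarrow> real"
  assumes "finite P" "finite Q"
  shows "(\<Sum>y\<in>P \<times> Q. (if x1 = fst y then 1 else 0) * (h (fst y) + h (snd y)))
         = (if x1 \<in> P then real (card Q) * h x1 + sum h Q else 0)"
  unfolding cp using assms by (simp add: sum.delta sum.distrib ifm ifm2 sif mult.assoc[symmetric])

lemma ps3:
  fixes h :: "real \<Rightarrow> real"
  assumes "finite P" "finite Q"
  shows "(\<Sum>y\<in>P \<times> Q. (if x2 = snd y then 1 else 0) * (h (fst y) + h (snd y)))
         = (if x2 \<in> Q then real (card P) * h x2 + sum h P else 0)"
  unfolding cp using assms by (simp add: sum.delta sum.distrib ifm ifm2 sif mult.assoc[symmetric])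

lemma ps4:
  fixes h :: "real \<Rightarrow> real"
  assumes "finite P" "finite Q"
  shows "(\<Sum>y\<in>P \<times> Q. (if x1 = fst y then 1 else 0) * (if x2 = snd y then 1 else 0) * (h (fst y) + h (snd y)))
         = (if x1 \<in> P \<and> x2 \<in> Q then h x1 + h x2 else 0)"
  unfolding cp using assms by (simp add: sum.delta ifm ifm2 sif mult.assoc[symmetric])

lemma kern_decomp:
  "comp_kernel \<kappa> (x1, x2) y = \<kappa> 0 + (\<kappa> 1 - \<kappa> 0) * ((if x1 = fst y then 1 else 0) + (if x2 = snd y then 1 else 0))
     + (\<kappa> 2 - 2 * \<kappa> 1 + \<kappa> 0) * ((if x1 = fst y then 1 else 0) * (if x2 = snd y then 1 else 0))"
  by (auto simp: comp_kernel_def shared_def numeral_2_eq_2)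

lemma row_formula:
  fixes V W :: "real set" and h :: "real \<Rightarrow> real" and \<kappa> :: "nat \<Rightarrow> real"
  assumes fin: "finite V" and sub: "W \<subseteq> V" and hW: "sum h W = 0" and hV: "sum h V = 0"
     and x1: "x1 \<in> V" and x2: "x2 \<in> V"
  shows "(\<Sum>y\<in>train_set V W. (h (fst y) + h (snd y)) * comp_kernel \<kappa> (x1, x2) y)
     = (\<kappa> 1 - \<kappa> 0) * ((real (card V) - (if x1 \<in> V - W then real (card (V - W)) else 0)) * h x1
                        + (real (card V) - (if x2 \<in> V - W then real (card (V - W)) else 0)) * h x2)
       + (\<kappa> 2 - 2 * \<kappa> 1 + \<kappa> 0) * (if (x1, x2) \<in> train_set V W then h x1 + h x2 else 0)"
proof -
  let ?T = "train_set V W" and ?U = "V - W"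
  define A where "A = \<kappa> 1 - \<kappa> 0"
  define B where "B = \<kappa> 2 - 2 * \<kappa> 1 + \<kappa> 0"
  define c where "c = (\<lambda>y::real\<times>real. h (fst y) + h (snd y))"
  define e1 where "e1 = (\<lambda>y::real\<times>real. if x1 = fst y then 1 else (0::real))"
  define e2 where "e2 = (\<lambda>y::real\<times>real. if x2 = snd y then 1 else (0::real))"
  have finU: "finite ?U" using fin by simp
  have hU: "sum h ?U = 0" using sum_diff[OF fin sub, of h] hW hV by simp
  have "(\<Sum>y\<in>?T. c y * comp_kernel \<kappa> (x1, x2) y)
      = (\<Sum>y\<in>?T. \<kappa> 0 * c y + A * (e1 y * c y) + A * (e2 y * c y) + B * (e1 y * e2 y * c y))"
    by (rule sum.cong) (auto simp: kern_decomp A_def B_def e1_def e2_def algebra_simps)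
  also have "\<dots> = \<kappa> 0 * (\<Sum>y\<in>?T. c y) + A * (\<Sum>y\<in>?T. e1 y * c y) + A * (\<Sum>y\<in>?T. e2 y * c y)
      + B * (\<Sum>y\<in>?T. e1 y * e2 y * c y)"
    by (simp add: sum.distrib sum_distrib_left)
  also have "(\<Sum>y\<in>?T. c y) = 0"
    unfolding sumT[OF fin sub] c_def ps1[OF fin fin] ps1[OF finU finU] hV hU by simp
  also have "(\<Sum>y\<in>?T. e1 y * c y) = (real (card V) - (if x1 \<in> ?U then real (card ?U) else 0)) * h x1"
    unfolding sumT[OF fin sub] c_def e1_def ps2[OF fin fin] ps2[OF finU finU] hV hU
    using x1 by (simp add: algebra_simps)
  also have "(\<Sum>y\<in>?T. e2 y * c y) = (real (card V) - (if x2 \<in> ?U then real (card ?U) else 0)) * h x2"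
    unfolding sumT[OF fin sub] c_def e2_def ps3[OF fin fin] ps3[OF finU finU] hV hU
    using x2 by (simp add: algebra_simps)
  also have "(\<Sum>y\<in>?T. e1 y * e2 y * c y) = (if (x1, x2) \<in> ?T then h x1 + h x2 else 0)"
    unfolding sumT[OF fin sub] c_def e1_def e2_def ps4[OF fin fin] ps4[OF finU finU]
    using x1 x2 by (auto simp: train_set_def)
  finally show ?thesis unfolding c_def A_def B_def by (simp add: algebra_simps)
qed

lemma kernel_zero:
  fixes V W :: "real set" and h :: "real \<Rightarrow> real" and \<kappa> :: "nat \<Rightarrow> real"
    and A B :: real and N :: "real \<Rightarrow> real"
  assumes fin: "finite V" and sub: "W \<subseteq> V" and hW: "sum h W = 0" and hV: "sum h V = 0"
    and inv: "kernel_matrix_invertible (comp_kernel \<kappa>) (train_set V W)"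
    and Ad: "A = \<kappa> 1 - \<kappa> 0" and Bd: "B = \<kappa> 2 - 2 * \<kappa> 1 + \<kappa> 0"
    and Nd: "\<And>u. N u = real (card V) - (if u \<in> V - W then real (card (V - W)) else 0)"
    and z: "\<And>u. u \<in> V \<Longrightarrow> (A * N u + B) * h u = 0"
  shows "\<forall>y\<in>train_set V W. h (fst y) + h (snd y) = 0"
proof -
  have R: "\<forall>i\<in>train_set V W. (\<Sum>j\<in>train_set V W. (h (fst j) + h (snd j)) * comp_kernel \<kappa> i j) = 0"
  proof
    fix i assume i: "i \<in> train_set V W"
    obtain x1 x2 where ix: "i = (x1, x2)" by force
    have x1: "x1 \<in> V" and x2: "x2 \<in> V" using i ix by (auto simp: train_set_def)
    have "(\<Sum>j\<in>train_set V W. (h (fst j) + h (snd j)) * comp_kernel \<kappa> i j)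
        = A * (N x1 * h x1 + N x2 * h x2) + B * (h x1 + h x2)"
      unfolding ix row_formula[OF fin sub hW hV x1 x2] Ad[symmetric] Bd[symmetric] Nd[symmetric]
      using i ix by simp
    also have "\<dots> = (A * N x1 + B) * h x1 + (A * N x2 + B) * h x2" by algebra
    also have "\<dots> = 0" by (simp only: z[OF x1] z[OF x2] add_0_right)
    finally show "(\<Sum>j\<in>train_set V W. (h (fst j) + h (snd j)) * comp_kernel \<kappa> i j) = 0" .
  qed
  have H: "\<And>c. (\<forall>i\<in>train_set V W. (\<Sum>j\<in>train_set V W. c j * comp_kernel \<kappa> i j) = 0)
      \<Longrightarrow> \<forall>j\<in>train_set V W. c j = 0"
    using inv unfolding kernel_matrix_invertible_def by blast
  show ?thesis using H[of "\<lambda>j. h (fst j) + h (snd j)", OF R] by simp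
qed

lemma alg:
  fixes A D p :: real
  assumes "D > 0"
  shows "p * (A / D) / (1 + (p - 2) * (A / D)) = A * p / (A * p + (D - 2 * A))"
proof -
  have e: "1 + (p - 2) * (A / D) = (A * p + (D - 2 * A)) / D"
    using assms by (simp add: field_simps)
  have f: "p * (A / D) = (A * p) / D" by simp
  show ?thesis unfolding e f using assms
    by (cases "A * p + (D - 2 * A) = 0") (simp_all add: field_simps)
qed

theorem proposition2:
  fixes V W :: "real set" and \<kappa> :: "nat \<Rightarrow> real" and a :: "real \<times> real \<Rightarrow> real"
    and v1 v2 :: real
  assumes "finite V" and "V \<noteq> {}" and "W \<subseteq> V" and "W \<noteq> {}"
    and "(\<Sum>v\<in>V. v) / real (card V) = 0"
    and "(\<Sum>v\<in>W. v) / real (card W) = 0"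
    and "\<kappa> 2 > \<kappa> 0"
    and "kernel_matrix_invertible (comp_kernel \<kappa>) (train_set V W)"
    and "\<forall>x\<in>train_set V W.
           (\<Sum>x'\<in>train_set V W. a x' * comp_kernel \<kappa> x x') = fst x + snd x"
    and "v1 \<in> V - W" and "v2 \<in> V - W"
  shows "kernel_model (comp_kernel \<kappa>) (train_set V W) a (v1, v2)
         = (real (card W) * salience_1_2 \<kappa> / (1 + (real (card W) - 2) * salience_1_2 \<kappa>))
           * (v1 + v2)"
proof -
  note fin = assms(1) and sub = assms(3) and inv = assms(8) and interp = assms(9)
  let ?T = "train_set V W" and ?U = "V - W"
  define n where "n = real (card V)"
  define p where "p = real (card W)"
  define q where "q = real (card ?U)"
  define A where "A = \<kappa> 1 - \<kappa> 0"
  define B where "B = \<kappa> 2 - 2 * \<kappa> 1 + \<kappa> 0"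
  define Nf where "Nf = (\<lambda>u. real (card V) - (if u \<in> V - W then real (card (V - W)) else 0))"
  have finW: "finite W" using fin sub finite_subset by blast
  have finU: "finite ?U" using fin by simp
  have cardV: "card V > 0" using fin assms(2) by (simp add: card_gt_0_iff)
  have cardW: "card W > 0" using finW assms(4) by (simp add: card_gt_0_iff)
  have sV: "sum (\<lambda>v. v) V = 0" using assms(5) cardV by simp
  have sW: "sum (\<lambda>v. v) W = 0" using assms(6) cardW by simp
  have sU: "sum (\<lambda>v. v) ?U = 0" using sum_diff[OF fin sub, of "\<lambda>v. v"] sV sW by simp
  have pq: "q = n - p" unfolding q_def n_def p_def
    using card_Diff_subset[OF finW sub] card_mono[OF fin sub] by simp
  have NW: "Nf u = n" if "u \<in> W" for u using that unfolding Nf_def n_def by simp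
  have NU: "Nf u = p" if "u \<in> ?U" for u using that pq unfolding Nf_def n_def q_def by simp
  have Nfe: "\<And>u. Nf u = real (card V) - (if u \<in> V - W then real (card (V - W)) else 0)"
    unfolding Nf_def by simp
  note z_intro = kernel_zero[OF fin sub _ _ inv A_def B_def Nfe]
  have claim1: "A * n + B \<noteq> 0 \<or> (\<forall>w\<in>W. w = 0)"
  proof (rule ccontr)
    assume "\<not> ?thesis"
    then obtain w0 where w0: "w0 \<in> W" "w0 \<noteq> 0" and AB: "A * n + B = 0" by auto
    have "\<exists>w1\<in>W. w1 \<noteq> w0"
    proof (rule ccontr)
      assume "\<not> ?thesis"
      then have "W = {w0}" using w0 by blast
      then show False using sW w0 by simp
    qed
    then obtain w1 where w1: "w1 \<in> W" "w1 \<noteq> w0" by blast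
    define h where "h = (\<lambda>u::real. (if u = w0 then 1 else 0) - (if u = w1 then (1::real) else 0))"
    have "sum h W = 0" unfolding h_def using w0 w1 finW by (simp add: sum_subtractf)
    moreover have "sum h V = 0" unfolding h_def using w0 w1 fin sub by (simp add: sum_subtractf subset_iff)
    moreover have "(A * Nf u + B) * h u = 0" if "u \<in> V" for u
    proof (cases "u \<in> W")
      case True then show ?thesis using NW AB by simp
    next
      case False then have "h u = 0" using w0 w1 unfolding h_def by auto
      then show ?thesis by simp
    qed
    ultimately have "\<forall>y\<in>?T. h (fst y) + h (snd y) = 0" by (rule z_intro)
    moreover have "(w0, w0) \<in> ?T" using w0 sub by (auto simp: train_set_def)
    ultimately have "h (fst (w0, w0)) + h (snd (w0, w0)) = 0" by (rule bspec)
    then have "h w0 + h w0 = 0" by simp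
    then show False unfolding h_def using w1 by simp
  qed
  have claim2: "A * p + B \<noteq> 0 \<or> (\<forall>u\<in>?U. u = 0)"
  proof (rule ccontr)
    assume "\<not> ?thesis"
    then obtain w0 where w0: "w0 \<in> ?U" "w0 \<noteq> 0" and AB: "A * p + B = 0" by auto
    have "\<exists>w1\<in>?U. w1 \<noteq> w0"
    proof (rule ccontr)
      assume "\<not> ?thesis"
      then have "?U = {w0}" using w0 by blast
      then show False using sU w0 by simp
    qed
    then obtain w1 where w1: "w1 \<in> ?U" "w1 \<noteq> w0" by blast
    define h where "h = (\<lambda>u::real. (if u = w0 then 1 else 0) - (if u = w1 then (1::real) else 0))"
    have "sum h W = 0" unfolding h_def using w0 w1 finW by (simp add: sum_subtractf)
    moreover have "sum h V = 0" unfolding h_def using w0 w1 fin sub by (simp add: sum_subtractf subset_iff)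
    moreover have "(A * Nf u + B) * h u = 0" if "u \<in> V" for u
    proof (cases "u \<in> ?U")
      case True then show ?thesis using NU AB by simp
    next
      case False then have "h u = 0" using w0 w1 unfolding h_def by auto
      then show ?thesis by simp
    qed
    ultimately have allz: "\<forall>y\<in>?T. h (fst y) + h (snd y) = 0" by (rule z_intro)
    obtain w where w: "w \<in> W" using assms(4) by blast
    have wT: "(w0, w) \<in> ?T" using w0 w sub by (auto simp: train_set_def)
    have "h (fst (w0, w)) + h (snd (w0, w)) = 0" using allz wT by (rule bspec)
    then have "h w0 + h w = 0" by simp
    moreover have "w \<noteq> w0" "w \<noteq> w1" using w w0 w1 by auto
    ultimately show False unfolding h_def using w1 by simp
  qed
  define g where "g = (\<lambda>u. if u \<in> W then u / (A * n + B) else u / (A * p + B))"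
  have gW: "sum g W = 0"
  proof -
    have "sum g W = sum (\<lambda>u. u / (A * n + B)) W" unfolding g_def by (rule sum.cong) auto
    also have "\<dots> = 0" using sW by (simp add: sum_divide_distrib[symmetric])
    finally show ?thesis .
  qed
  have gU: "sum g ?U = 0"
  proof -
    have "sum g ?U = sum (\<lambda>u. u / (A * p + B)) ?U" unfolding g_def by (rule sum.cong) auto
    also have "\<dots> = 0" using sU by (simp add: sum_divide_distrib[symmetric])
    finally show ?thesis .
  qed
  have gV: "sum g V = 0" using sum_diff[OF fin sub, of g] gW gU by simp
  have gfix: "(A * Nf u + B) * g u = u" if "u \<in> V" for u
  proof (cases "u \<in> W")
    case True
    then have gu: "g u = u / (A * n + B)" and Nu: "Nf u = n" using NW unfolding g_def by auto
    show ?thesis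
    proof (cases "A * n + B = 0")
      case True
      then have "u = 0" using claim1 \<open>u \<in> W\<close> by blast
      then show ?thesis unfolding gu Nu by simp
    next
      case False
      then show ?thesis unfolding gu Nu by simp
    qed
  next
    case False
    then have uU: "u \<in> ?U" using that by simp
    then have gu: "g u = u / (A * p + B)" and Nu: "Nf u = p" using NU False unfolding g_def by auto
    show ?thesis
    proof (cases "A * p + B = 0")
      case True
      then have "u = 0" using claim2 uU by blast
      then show ?thesis unfolding gu Nu by simp
    next
      case False
      then show ?thesis unfolding gu Nu by simp
    qed
  qed
  have rowg: "(\<Sum>j\<in>?T. (g (fst j) + g (snd j)) * comp_kernel \<kappa> (x1, x2) j)
      = A * (Nf x1 * g x1 + Nf x2 * g x2) + B * (if (x1, x2) \<in> ?T then g x1 + g x2 else 0)"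
    if "x1 \<in> V" "x2 \<in> V" for x1 x2
    using row_formula[OF fin sub gW gV that, of \<kappa>] unfolding A_def B_def Nf_def by simp
  have aeq: "a y = g (fst y) + g (snd y)" if y: "y \<in> ?T" for y
  proof -
    define d where "d = (\<lambda>y. a y - (g (fst y) + g (snd y)))"
    have "\<forall>i\<in>?T. (\<Sum>j\<in>?T. d j * comp_kernel \<kappa> i j) = 0"
    proof
      fix i assume i: "i \<in> ?T"
      obtain x1 x2 where ix: "i = (x1, x2)" by force
      have x1: "x1 \<in> V" and x2: "x2 \<in> V" using i ix by (auto simp: train_set_def)
      have "(\<Sum>j\<in>?T. d j * comp_kernel \<kappa> i j) = (\<Sum>j\<in>?T. a j * comp_kernel \<kappa> i j)
         - (\<Sum>j\<in>?T. (g (fst j) + g (snd j)) * comp_kernel \<kappa> i j)"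
        unfolding d_def by (simp add: sum_subtractf left_diff_distrib)
      also have "\<dots> = 0"
      proof -
        have r: "(\<Sum>j\<in>?T. a j * comp_kernel \<kappa> i j) = x1 + x2" using interp i ix by simp
        have rg: "(\<Sum>j\<in>?T. (g (fst j) + g (snd j)) * comp_kernel \<kappa> i j)
            = A * (Nf x1 * g x1 + Nf x2 * g x2) + B * (g x1 + g x2)"
          using rowg[OF x1 x2] i ix by simp
        have "A * (Nf x1 * g x1 + Nf x2 * g x2) + B * (g x1 + g x2)
            = (A * Nf x1 + B) * g x1 + (A * Nf x2 + B) * g x2" by algebra
        also have "\<dots> = x1 + x2" using gfix[OF x1] gfix[OF x2] by simp
        finally show ?thesis using r rg by simp
      qed
      finally show "(\<Sum>j\<in>?T. d j * comp_kernel \<kappa> i j) = 0" .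
    qed
    moreover have H: "\<And>c. (\<forall>i\<in>?T. (\<Sum>j\<in>?T. c j * comp_kernel \<kappa> i j) = 0) \<Longrightarrow> \<forall>j\<in>?T. c j = 0"
      using inv unfolding kernel_matrix_invertible_def by blast
    ultimately have "d y = 0" using y by blast
    then show ?thesis unfolding d_def by simp
  qed
  have v1: "v1 \<in> V" "v1 \<in> ?U" and v2: "v2 \<in> V" "v2 \<in> ?U" using assms(10,11) by auto
  have notT: "(v1, v2) \<notin> ?T" using v1 v2 by (auto simp: train_set_def)
  have "kernel_model (comp_kernel \<kappa>) ?T a (v1, v2)
      = (\<Sum>j\<in>?T. (g (fst j) + g (snd j)) * comp_kernel \<kappa> (v1, v2) j)"
    unfolding kernel_model_def by (rule sum.cong) (auto simp: aeq)
  also have "\<dots> = A * p * (v1 + v2) / (A * p + B)"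
    unfolding rowg[OF v1(1) v2(1)] using notT NU[OF v1(2)] NU[OF v2(2)] v1 v2
    unfolding g_def by (simp add: add_divide_distrib algebra_simps)
  also have "\<dots> = (real (card W) * salience_1_2 \<kappa> / (1 + (real (card W) - 2) * salience_1_2 \<kappa>)) * (v1 + v2)"
  proof -
    have D: "\<kappa> 2 - \<kappa> 0 > 0" using assms(7) by simp
    have BD: "B = (\<kappa> 2 - \<kappa> 0) - 2 * A" unfolding A_def B_def by simp
    have "p * (A / (\<kappa> 2 - \<kappa> 0)) / (1 + (p - 2) * (A / (\<kappa> 2 - \<kappa> 0)))
        = A * p / (A * p + B)"
      unfolding BD using D by (rule alg)
    then show ?thesis unfolding salience_1_2_def p_def[symmetric] A_def by simp
  qed
  finally show ?thesis .
qed

end
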